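(* Let $z\in\mathbb{R}_{\ge0}^s$ with $\sum_j z_j>0$ and $\eta>0$, let $S=\{j: z_j>0\}$, and for $j\in S$ let $g_j=\frac{1}{(\sum_l z_l)^2}\sum_k z_k\log\frac{z_k}{z_j}$. Let $\tilde z_j=\max(z_j-\eta g_j,0)$ for $j\in S$ and $\tilde z_j=0$ for $j\notin S$. Suppose that a smallest non-zero entry $z_{i_0}$ of $z$ satisfies $\tilde z_{i_0}>0$. Then for every $i\in S$, $$\frac{\tilde z_i}{\sum_j\tilde z_j}-\frac{z_i}{\sum_j z_j}=\frac{z_i-\eta g_i}{\sum_{j\in S}(z_j-\eta g_j)}-\frac{z_i}{\sum_j z_j}=\frac{\eta}{c}\Big[z_i\sum_{j\in S}g_j-\Big(\sum_j z_j\Big)g_i\Big],$$ where $c=\big(\sum_j z_j\big)\big(\sum_{j\in S}(z_j-\eta g_j)\big)>0$ does not depend on $i$.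
   Context: $g_j$ is the partial derivative with respect to $z_j$ of the entropy $\mathcal{H}(z)=-\sum_i \frac{z_i}{\sum_l z_l}\log\frac{z_i}{\sum_l z_l}$ (convention $0\log0=0$, so terms with $z_k=0$ contribute $0$). *)

theory Defs
  imports Complex_Main
begin

text \<open>Vectors z in R^s are functions on a finite index type 'n (s = CARD('n)).\<close>

definition supp_pos :: "('n::finite \<Rightarrow> real) \<Rightarrow> 'n set" where
  "supp_pos z = {j. z j > 0}"

text \<open>g_j = (1/(sum_l z_l)^2) * sum_k z_k log(z_k/z_j); terms with z_k = 0 vanish
  since they are multiplied by z_k = 0 (the 0 log 0 = 0 convention).\<close>
definition gval :: "('n::finite \<Rightarrow> real) \<Rightarrow> 'n \<Rightarrow> real" where
  "gval z j = (1 / (\<Sum>l\<in>UNIV. z l)^2) * (\<Sum>k\<in>UNIV. z k * ln (z k / z j))"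

definition ztil :: "real \<Rightarrow> ('n::finite \<Rightarrow> real) \<Rightarrow> 'n \<Rightarrow> real" where
  "ztil \<eta> z j = (if j \<in> supp_pos z then max (z j - \<eta> * gval z j) 0 else 0)"

end

theory Submission
  imports Defs
begin

lemma gval_alt:
  fixes z :: "'n::finite \<Rightarrow> real"
  assumes nonneg: "\<And>j. z j \<ge> 0" and zj: "z j > 0"
  shows "gval z j = ((\<Sum>k\<in>UNIV. z k * ln (z k)) - (\<Sum>l\<in>UNIV. z l) * ln (z j)) / (\<Sum>l\<in>UNIV. z l)^2"
proof -
  have "\<And>k. z k * ln (z k / z j) = z k * ln (z k) - z k * ln (z j)"
  proof -
    fix k
    show "z k * ln (z k / z j) = z k * ln (z k) - z k * ln (z j)"
    proof (cases "z k = 0")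
      case True then show ?thesis by simp
    next
      case False
      then have "z k > 0" using nonneg[of k] by simp
      then show ?thesis using zj by (simp add: ln_div algebra_simps)
    qed
  qed
  then have "(\<Sum>k\<in>UNIV. z k * ln (z k / z j)) = (\<Sum>k\<in>UNIV. z k * ln (z k)) - (\<Sum>l\<in>UNIV. z l) * ln (z j)"
    by (simp add: sum_subtractf sum_distrib_right)
  then show ?thesis unfolding gval_def by simp
qed

theorem corollary9:
  fixes z :: "'n::finite \<Rightarrow> real" and \<eta> :: real
  assumes nonneg: "\<And>j. z j \<ge> 0"
    and pos: "(\<Sum>j\<in>UNIV. z j) > 0"
    and eta: "\<eta> > 0"
    and smallest: "\<exists>i0\<in>supp_pos z. z i0 = Min (z ` supp_pos z) \<and> ztil \<eta> z i0 > 0"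
  defines "c \<equiv> (\<Sum>j\<in>UNIV. z j) * (\<Sum>j\<in>supp_pos z. z j - \<eta> * gval z j)"
  shows "c > 0 \<and>
    (\<forall>i\<in>supp_pos z.
       ztil \<eta> z i / (\<Sum>j\<in>UNIV. ztil \<eta> z j) - z i / (\<Sum>j\<in>UNIV. z j)
         = (z i - \<eta> * gval z i) / (\<Sum>j\<in>supp_pos z. z j - \<eta> * gval z j) - z i / (\<Sum>j\<in>UNIV. z j)
     \<and> (z i - \<eta> * gval z i) / (\<Sum>j\<in>supp_pos z. z j - \<eta> * gval z j) - z i / (\<Sum>j\<in>UNIV. z j)
         = \<eta> / c * (z i * (\<Sum>j\<in>supp_pos z. gval z j) - (\<Sum>j\<in>UNIV. z j) * gval z i))"
proof -
  define Z where "Z = (\<Sum>j\<in>UNIV. z j)"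
  define A where "A = (\<Sum>k\<in>UNIV. z k * ln (z k))"
  define S where "S = supp_pos z"
  obtain i0 where i0S: "i0 \<in> S" and i0min: "z i0 = Min (z ` S)" and i0t: "ztil \<eta> z i0 > 0"
    using smallest unfolding S_def by blast
  have finS: "finite S" by simp
  have Sz: "\<And>j. j \<in> S \<longleftrightarrow> z j > 0" unfolding S_def supp_pos_def by simp
  have i0pos: "z i0 - \<eta> * gval z i0 > 0"
    using i0t i0S unfolding ztil_def S_def by (auto split: if_splits)
  have gS: "\<And>j. j \<in> S \<Longrightarrow> gval z j = (A - Z * ln (z j)) / Z^2"
    unfolding A_def Z_def using Sz by (intro gval_alt[OF nonneg]) auto
  have posj: "z j - \<eta> * gval z j > 0" if jS: "j \<in> S" for j
  proof -
    have "z i0 \<le> z j" using i0min jS finS by simp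
    moreover have "z i0 > 0" using i0S Sz by blast
    ultimately have "ln (z i0) \<le> ln (z j)" by simp
    then have "Z * ln (z i0) \<le> Z * ln (z j)" using pos Z_def by (simp add: mult_left_mono)
    then have "(A - Z * ln (z j)) / Z^2 \<le> (A - Z * ln (z i0)) / Z^2"
      by (simp add: divide_right_mono)
    then have "gval z j \<le> gval z i0" using gS jS i0S by simp
    then have "\<eta> * gval z j \<le> \<eta> * gval z i0" using eta by simp
    then show ?thesis using i0pos \<open>z i0 \<le> z j\<close> by linarith
  qed
  define D where "D = (\<Sum>j\<in>S. z j - \<eta> * gval z j)"
  have Dpos: "D > 0" unfolding D_def using i0S posj
    by (intro sum_pos2[OF finS i0S]) (auto intro: less_imp_le)
  have ztS: "\<And>j. j \<in> S \<Longrightarrow> ztil \<eta> z j = z j - \<eta> * gval z j"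
    using posj unfolding ztil_def S_def by fastforce
  have ztN: "\<And>j. j \<notin> S \<Longrightarrow> ztil \<eta> z j = 0"
    unfolding ztil_def S_def by simp
  have sumzt: "(\<Sum>j\<in>UNIV. ztil \<eta> z j) = D"
  proof -
    have "(\<Sum>j\<in>UNIV. ztil \<eta> z j) = (\<Sum>j\<in>S. ztil \<eta> z j)"
      by (rule sum.mono_neutral_right) (auto simp: ztN)
    also have "\<dots> = D" unfolding D_def by (rule sum.cong) (auto simp: ztS)
    finally show ?thesis .
  qed
  have ZS: "(\<Sum>j\<in>S. z j) = Z"
  proof -
    have "Z = (\<Sum>j\<in>S. z j)" unfolding Z_def
      by (rule sum.mono_neutral_right) (use nonneg Sz in \<open>auto simp: order.order_iff_strict\<close>)
    then show ?thesis by simp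
  qed
  define G where "G = (\<Sum>j\<in>S. gval z j)"
  have DZ: "D = Z - \<eta> * G" unfolding D_def G_def
    by (simp add: sum_subtractf sum_distrib_left ZS)
  have Zpos: "Z > 0" using pos Z_def by simp
  have c: "c = Z * D" unfolding c_def Z_def D_def S_def by simp
  have cpos: "c > 0" using c Zpos Dpos by simp
  have eq2: "(z i - \<eta> * gval z i) / D - z i / Z = \<eta> / c * (z i * G - Z * gval z i)" for i
  proof -
    have "(z i - \<eta> * gval z i) / D - z i / Z = (Z * (z i - \<eta> * gval z i) - z i * D) / (Z * D)"
      using Zpos Dpos by (simp add: field_simps)
    also have "\<dots> = \<eta> * (z i * G - Z * gval z i) / c" unfolding c DZ
      by (simp add: algebra_simps)
    finally show ?thesis by simp
  qed
  show ?thesis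
    using cpos eq2 ztS sumzt
    unfolding Z_def[symmetric] S_def[symmetric] D_def[symmetric] G_def[symmetric]
    by simp
qed

end
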